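(* Assume (H1)–(H5) and $\mathbb A_n=\mathbb T_n$. Then $\lim_{n\to\infty}\mathbb E[R_0(n)^2]=0$.
   Context: Let $d\ge1$, $S=\mathbb R^d$ with Borel $\sigma$-field. Binary tree: $\mathbb G_0=\mathbb T_0=\{\emptyset\}$, $\mathbb G_k=\{0,1\}^k$ (so $|\mathbb G_k|=2^k$), $\mathbb T_k=\bigcup_{r\le k}\mathbb G_r$, $\mathbb T=\bigcup_{r\ge0}\mathbb G_r$; $ij$ is the concatenation of words $i,j$ and $iA=\{ij:j\in A\}$. Given a probability kernel $\mathcal P$ from $S$ to $S^2$, for $g:S^3\to\mathbb R$ set $\mathcal Pg(y)=\int g(y,y_0,y_1)\mathcal P(y,dy_0,dy_1)$ and for $h:S^2\to\mathbb R$ set $\mathcal Ph(y)=\int h(y_0,y_1)\mathcal P(y,dy_0,dy_1)$. A bifurcating Markov chain (BMC) with initial law $\nu$ and kernel $\mathcal P$ is a process $X=(X_i)_{i\in\mathbb T}$ with values in $S$ such that $X_\emptyset\sim\nu$ and for all $k\ge0$ and bounded measurable $g_i:S^3\to\mathbb R$, $\mathbb E[\prod_{i\in\mathbb G_k}g_i(X_i,X_{i0},X_{i1})\mid\sigma(X_j;j\in\mathbb T_k)]=\prod_{i\in\mathbb G_k}\mathcal Pg_i(X_i)$. Let $P_0(y,A)=\mathcal P(y,A\times S)$, $P_1(y,A)=\mathcal P(y,S\times A)$, $\mathcal Q=\frac12(P_0+P_1)$, $\mathcal Q^n$ its $n$-th iterate, $\langle\lambda,f\rangle=\int f\,d\lambda$.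 For finite $A\subset\mathbb T$ and $f:S^3\to\mathbb R$, $M_A(f)=\sum_{u\in A}f(X_u,X_{u0},X_{u1})$. $X$ is a BMC with kernel $\mathcal P$ and initial law $\nu$ satisfying: (H1) There is a set $F$ of real measurable functions on $S$ which is a vector space containing the constants, with $f^2\in F$ for $f\in F$, $F\subset L^1(\nu)$, and for $f_0,f_1\in F$, $f_0\otimes f_1$ is $\mathcal P(y,\cdot)$-integrable for every $y$ and $\mathcal P(f_0\otimes f_1)\in F$. (H2) There is a probability measure $\mu$ on $S$ with $F\subset L^1(\mu)$ such that for every $f\in F$, $\mathcal Q^nf\to\langle\mu,f\rangle$ pointwise and there is $g\in F$ with $|\mathcal Q^nf|\le g$ for all $n$; moreover there exist $V\in F$ with $V\ge1$, $\alpha\in(0,1)$ and $M<\infty$ such that $|\mathcal Q^nf-\langle\mu,f\rangle|\le M\alpha^nV$ for all $n\in\mathbb N$ and all measurable $f$ with $|f|\le V$. (H3) $\mathcal P(y,dy_0,dy_1)$ has a Lebesgue density $\mathcal P(y,y_0,y_1)$; then $\mathcal Q$ has density $\mathcal Q(y,z)=\frac12\int(\mathcal P(y,z,w)+\mathcal P(y,w,z))dw$, $\mu$ has a Lebesgue density denoted $\mu(\cdot)$, and $\mu^{\triangle}(y,y_0,y_1)=\mu(y)\mathcal P(y,y_0,y_1)$. (H4) $C_0=\sup_{y,y_0,y_1\in S}(\mu(y)+\mathcal Q(y,y_0)+\mathcal P(y,y_0,y_1))<\infty$. (H5) $h_n=2^{-n\gamma}$ for some $\gamma\in(0,1/(3d))$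 with $2\alpha^2<2^{3d\gamma}$; $K_0:\mathbb R^d\to\mathbb R$ is bounded, integrable (hence square integrable) with $\int K_0=1$. Let $K=K_0\otimes K_0\otimes K_0$ on $\mathbb R^{3d}$. Fix $(x,x_0,x_1)\in S^3$ with $\mu(x)>0$. Define $f_n(y,y_0,y_1)=h_n^{-3d/2}K(h_n^{-1}(x-y),h_n^{-1}(x_0-y_0),h_n^{-1}(x_1-y_1))$ and $\tilde f_n=f_n-\langle\mu,\mathcal Pf_n\rangle$. Let $(p_n)$ be a non-decreasing sequence of positive integers with $p_n<n$, $p_n/n\to1$, and $n-p_n-\lambda\log n\to+\infty$ for every $\lambda>0$; write $p=p_n$. Define $R_0(n)=|\mathbb G_n|^{-1/2}\sum_{k=0}^{n-p-1}M_{\mathbb G_k}(\tilde f_n)$. *)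

theory Defs
  imports "HOL-Probability.Probability"
begin

text \<open>Binary tree: vertices are words over {0,1}, encoded as bool lists
  (False = 0, True = 1); the word i0 is i @ [False], the word i1 is i @ [True].\<close>

definition Gen :: "nat \<Rightarrow> bool list set" where
  "Gen k = {u. length u = k}"

definition Tree :: "nat \<Rightarrow> bool list set" where
  "Tree k = {u. length u \<le> k}"

definition Pop3 :: "('a \<Rightarrow> ('a \<times> 'a) measure) \<Rightarrow> ('a \<times> 'a \<times> 'a \<Rightarrow> real) \<Rightarrow> 'a \<Rightarrow> real" where
  "Pop3 P g y = (\<integral>z. g (y, fst z, snd z) \<partial>(P y))"

definition Pop2 :: "('a \<Rightarrow> ('a \<times> 'a) measure) \<Rightarrow> ('a \<times> 'a \<Rightarrow> real) \<Rightarrow> 'a \<Rightarrow> real" where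
  "Pop2 P h y = (\<integral>z. h z \<partial>(P y))"

definition Qop :: "('a \<Rightarrow> ('a \<times> 'a) measure) \<Rightarrow> ('a \<Rightarrow> real) \<Rightarrow> 'a \<Rightarrow> real" where
  "Qop P f y = ((\<integral>z. f (fst z) \<partial>(P y)) + (\<integral>z. f (snd z) \<partial>(P y))) / 2"

definition gen_sigma :: "'w measure \<Rightarrow> ('i \<Rightarrow> 'w \<Rightarrow> 'a::topological_space) \<Rightarrow> 'i set \<Rightarrow> 'w measure" where
  "gen_sigma M X I = sigma (space M) {X i -` A \<inter> space M | i A. i \<in> I \<and> A \<in> sets borel}"

definition MA :: "bool list set \<Rightarrow> (bool list \<Rightarrow> 'w \<Rightarrow> 'a) \<Rightarrow> ('a \<times> 'a \<times> 'a \<Rightarrow> real) \<Rightarrow> 'w \<Rightarrow> real" where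
  "MA A X f \<omega> = (\<Sum>u\<in>A. f (X u \<omega>, X (u @ [False]) \<omega>, X (u @ [True]) \<omega>))"

definition BMC :: "'w measure \<Rightarrow> (bool list \<Rightarrow> 'w \<Rightarrow> 'a::euclidean_space) \<Rightarrow> 'a measure
                   \<Rightarrow> ('a \<Rightarrow> ('a \<times> 'a) measure) \<Rightarrow> bool" where
  "BMC M X \<nu> P \<longleftrightarrow>
     prob_space M \<and>
     (\<forall>u. X u \<in> borel_measurable M) \<and>
     distr M borel (X []) = \<nu> \<and>
     (\<forall>k (g :: bool list \<Rightarrow> 'a \<times> 'a \<times> 'a \<Rightarrow> real).
        (\<forall>i\<in>Gen k. g i \<in> borel_measurable borel \<and> bounded (range (g i))) \<longrightarrow>
        (AE \<omega> in M.
           real_cond_exp M (gen_sigma M X (Tree k))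
             (\<lambda>\<omega>. \<Prod>i\<in>Gen k. g i (X i \<omega>, X (i @ [False]) \<omega>, X (i @ [True]) \<omega>)) \<omega>
           = (\<Prod>i\<in>Gen k. Pop3 P (g i) (X i \<omega>))))"

definition H1 :: "('a::euclidean_space \<Rightarrow> real) set \<Rightarrow> 'a measure \<Rightarrow> ('a \<Rightarrow> ('a \<times> 'a) measure) \<Rightarrow> bool" where
  "H1 F \<nu> P \<longleftrightarrow>
     (\<forall>f\<in>F. f \<in> borel_measurable borel) \<and>
     (\<forall>f\<in>F. \<forall>g\<in>F. (\<lambda>y. f y + g y) \<in> F) \<and>
     (\<forall>c. \<forall>f\<in>F. (\<lambda>y. c * f y) \<in> F) \<and>
     (\<forall>c. (\<lambda>_. c) \<in> F) \<and>
     (\<forall>f\<in>F. (\<lambda>y. (f y)\<^sup>2) \<in> F) \<and>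
     (\<forall>f\<in>F. integrable \<nu> f) \<and>
     (\<forall>f0\<in>F. \<forall>f1\<in>F.
        (\<forall>y. integrable (P y) (\<lambda>z. f0 (fst z) * f1 (snd z))) \<and>
        Pop2 P (\<lambda>z. f0 (fst z) * f1 (snd z)) \<in> F)"

definition H2 :: "('a::euclidean_space \<Rightarrow> real) set \<Rightarrow> ('a \<Rightarrow> ('a \<times> 'a) measure) \<Rightarrow> 'a measure \<Rightarrow> real \<Rightarrow> bool" where
  "H2 F P \<mu> \<alpha> \<longleftrightarrow>
     prob_space \<mu> \<and> sets \<mu> = sets borel \<and>
     (\<forall>f\<in>F. integrable \<mu> f) \<and>
     (\<forall>f\<in>F. (\<forall>y. (\<lambda>n. (Qop P ^^ n) f y) \<longlonglongrightarrow> (\<integral>z. f z \<partial>\<mu>)) \<and>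
             (\<exists>g\<in>F. \<forall>n y. \<bar>(Qop P ^^ n) f y\<bar> \<le> g y)) \<and>
     0 < \<alpha> \<and> \<alpha> < 1 \<and>
     (\<exists>V\<in>F. (\<forall>y. 1 \<le> V y) \<and>
        (\<exists>Mc::real. \<forall>f n y. f \<in> borel_measurable borel \<longrightarrow> (\<forall>z. \<bar>f z\<bar> \<le> V z) \<longrightarrow>
             \<bar>(Qop P ^^ n) f y - (\<integral>z. f z \<partial>\<mu>)\<bar> \<le> Mc * \<alpha> ^ n * V y))"

definition Qd :: "('a::euclidean_space \<Rightarrow> 'a \<Rightarrow> 'a \<Rightarrow> real) \<Rightarrow> 'a \<Rightarrow> 'a \<Rightarrow> ennreal" where
  "Qd pd y z = (\<integral>\<^sup>+ w. (ennreal (pd y z w) + ennreal (pd y w z)) \<partial>lborel) / 2"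

definition fn :: "('a::euclidean_space \<Rightarrow> real) \<Rightarrow> real \<Rightarrow> 'a \<times> 'a \<times> 'a \<Rightarrow> 'a \<times> 'a \<times> 'a \<Rightarrow> real" where
  "fn K0 h xx yy = (case xx of (x, x0, x1) \<Rightarrow> case yy of (y, y0, y1) \<Rightarrow>
      h powr (- (3 * real DIM('a)) / 2) *
      (K0 ((1 / h) *\<^sub>R (x - y)) * K0 ((1 / h) *\<^sub>R (x0 - y0)) * K0 ((1 / h) *\<^sub>R (x1 - y1))))"

end

theory Submission imports Defs begin

lemma card_Gen: "card (Gen k) = 2 ^ k"
proof -
  have "Gen k = {xs. set xs \<subseteq> (UNIV::bool set) \<and> length xs = k}" by (auto simp: Gen_def)
  thus ?thesis using card_lists_length_eq[of "UNIV::bool set" k] by simp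
qed

lemma finite_Gen: "finite (Gen k)"
proof -
  have "Gen k = {xs. set xs \<subseteq> (UNIV::bool set) \<and> length xs = k}" by (auto simp: Gen_def)
  thus ?thesis using finite_lists_length_eq[of "UNIV::bool set" k] by simp
qed

lemma int_bound:
  assumes "prob_space N" "\<And>z. \<bar>f z\<bar> \<le> (c::real)"
  shows "\<bar>integral\<^sup>L N f\<bar> \<le> c"
proof (cases "integrable N f")
  case True
  have "\<bar>integral\<^sup>L N f\<bar> \<le> integral\<^sup>L N (\<lambda>z. \<bar>f z\<bar>)" by (rule integral_abs_bound)
  also have "\<dots> \<le> integral\<^sup>L N (\<lambda>z. c)"
    using True assms(1) by (intro integral_mono) (auto intro: assms(2) finite_measure.integrable_const prob_space.finite_measure)
  also have "\<dots> = c" using assms(1) by (simp add: prob_space.prob_space)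
  finally show ?thesis .
next
  case False
  have "0 \<le> c" using assms(2)[of undefined] by linarith
  thus ?thesis using False by (simp add: not_integrable_integral_eq)
qed

lemma fn_bound:
  fixes K0 :: "'a::euclidean_space \<Rightarrow> real"
  assumes "\<And>u. \<bar>K0 u\<bar> \<le> B"
  shows "\<bar>fn K0 h xx t\<bar> \<le> h powr (- (3 * real DIM('a)) / 2) * B ^ 3"
proof -
  obtain x x0 x1 where xx: "xx = (x, x0, x1)" by (cases xx) auto
  obtain y y0 y1 where t: "t = (y, y0, y1)" by (cases t) auto
  have B: "0 \<le> B" using assms[of 0] by linarith
  have "\<bar>K0 ((1 / h) *\<^sub>R (x - y)) * K0 ((1 / h) *\<^sub>R (x0 - y0)) * K0 ((1 / h) *\<^sub>R (x1 - y1))\<bar> \<le> B * B * B"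
    unfolding abs_mult by (intro mult_mono assms) (auto simp: B)
  hence "h powr (- (3 * real DIM('a)) / 2) * \<bar>K0 ((1 / h) *\<^sub>R (x - y)) * K0 ((1 / h) *\<^sub>R (x0 - y0)) * K0 ((1 / h) *\<^sub>R (x1 - y1))\<bar> \<le> h powr (- (3 * real DIM('a)) / 2) * (B * B * B)"
    by (intro mult_left_mono) auto
  moreover have "fn K0 h xx t = h powr (- (3 * real DIM('a)) / 2) * (K0 ((1 / h) *\<^sub>R (x - y)) * K0 ((1 / h) *\<^sub>R (x0 - y0)) * K0 ((1 / h) *\<^sub>R (x1 - y1)))"
    unfolding xx t fn_def prod.case by (rule refl)
  ultimately show ?thesis by (simp only: abs_mult abs_of_nonneg[OF powr_ge_zero] power3_eq_cube)
qed

lemma MA_bound: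
  assumes "finite A" "\<And>t. \<bar>g t\<bar> \<le> (c::real)"
  shows "\<bar>MA A X g \<omega>\<bar> \<le> real (card A) * c"
proof -
  have "\<bar>MA A X g \<omega>\<bar> \<le> (\<Sum>u\<in>A. \<bar>g (X u \<omega>, X (u @ [False]) \<omega>, X (u @ [True]) \<omega>)\<bar>)"
    unfolding MA_def by (rule sum_abs)
  also have "\<dots> \<le> (\<Sum>u\<in>A. c)" by (intro sum_mono assms(2))
  finally show ?thesis by simp
qed

lemma geo2: "(\<Sum>k<m. (2::real) ^ k) \<le> 2 ^ m"
  by (induction m) auto

lemma pow_lim:
  fixes E :: "nat \<Rightarrow> real"
  assumes "filterlim E at_bot sequentially"
  shows "(\<lambda>n. 2 powr E n) \<longlonglongrightarrow> 0"
proof -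
  have "filterlim (\<lambda>n. ln 2 * E n) at_bot sequentially"
    by (rule filterlim_tendsto_pos_mult_at_bot[OF tendsto_const _ assms]) simp
  hence "(\<lambda>n. exp (ln 2 * E n)) \<longlonglongrightarrow> 0"
    by (rule filterlim_compose[OF exp_at_bot])
  moreover have "\<And>n. exp (ln 2 * E n) = 2 powr E n" by (simp add: powr_def mult.commute)
  ultimately show ?thesis by simp
qed

lemma l1:
  fixes n :: nat and g :: "nat \<Rightarrow> real"
  assumes "E n = real n * (- 1 / 2) + real (m n) + real n * \<gamma> * (3 * d / 2)"
   "g n = (3 * d * \<gamma> - 1) / 2 + real (m n) / real n"  "m n = n - p n"
  shows "E n = g n * real n"
proof (cases "n = 0")
  case True thus ?thesis using assms by simp
next
  case False
  hence h2: "g n * real n = (3 * d * \<gamma> - 1) / 2 * real n + real (m n)"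
    unfolding assms(2) by (simp add: distrib_right)
  show ?thesis unfolding assms(1) h2 by (simp add: field_simps)
qed

lemma l2:
  fixes n :: nat
  assumes "1 \<le> n"
  shows "real (n - p n) / real n \<le> \<bar>1 - real (p n) / real n\<bar>"
proof (cases "p n \<le> n")
  case True
  hence "real (n - p n) / real n = 1 - real (p n) / real n" using assms by (simp add: of_nat_diff field_simps)
  thus ?thesis by simp
next
  case False thus ?thesis by simp
qed

theorem lemma6p1:
  fixes M :: "'w measure"
    and X :: "bool list \<Rightarrow> 'w \<Rightarrow> 'a::euclidean_space"
    and \<nu> \<mu> :: "'a measure"
    and P :: "'a \<Rightarrow> ('a \<times> 'a) measure"
    and F :: "('a \<Rightarrow> real) set"
    and \<alpha> \<gamma> :: real
    and pd :: "'a \<Rightarrow> 'a \<Rightarrow> 'a \<Rightarrow> real"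
    and mu_d :: "'a \<Rightarrow> real"
    and K0 :: "'a \<Rightarrow> real"
    and h :: "nat \<Rightarrow> real"
    and x x0 x1 :: 'a
    and p :: "nat \<Rightarrow> nat"
  assumes kernel: "P \<in> borel \<rightarrow>\<^sub>M prob_algebra borel"
    and bmc: "BMC M X \<nu> P"
    and H1: "H1 F \<nu> P"
    and H2: "H2 F P \<mu> \<alpha>"
    and H3_meas: "(\<lambda>(y, y0, y1). pd y y0 y1) \<in> borel_measurable borel"
    and H3_nonneg: "\<And>y y0 y1. 0 \<le> pd y y0 y1"
    and H3_dens: "\<And>y. P y = density lborel (\<lambda>z. ennreal (pd y (fst z) (snd z)))"
    and mu_dens: "\<mu> = density lborel (\<lambda>y. ennreal (mu_d y))"
    and mu_d_meas: "mu_d \<in> borel_measurable borel"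
    and mu_d_nonneg: "\<And>y. 0 \<le> mu_d y"
    and H4: "(SUP t. ennreal (mu_d (fst t)) + Qd pd (fst t) (fst (snd t))
                     + ennreal (pd (fst t) (fst (snd t)) (snd (snd t)))) < \<infinity>"
    and h_def: "\<And>n. h n = 2 powr (- real n * \<gamma>)"
    and gamma_pos: "0 < \<gamma>"
    and gamma_lt: "\<gamma> < 1 / (3 * real DIM('a))"
    and alpha_gamma: "2 * \<alpha>\<^sup>2 < 2 powr (3 * real DIM('a) * \<gamma>)"
    and K0_bounded: "bounded (range K0)"
    and K0_int: "integrable lborel K0"
    and K0_one: "(\<integral>u. K0 u \<partial>lborel) = 1"
    and mu_x_pos: "0 < mu_d x"
    and p_mono: "mono p"
    and p_range: "\<And>n. 2 \<le> n \<Longrightarrow> 0 < p n \<and> p n < n"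
    and p_ratio: "(\<lambda>n. real (p n) / real n) \<longlonglongrightarrow> 1"
    and p_gap: "\<And>lam. 0 < lam \<Longrightarrow>
                  filterlim (\<lambda>n. real n - real (p n) - lam * ln (real n)) at_top sequentially"
  shows "(\<lambda>n. \<integral>\<^sup>+ \<omega>.
            ennreal ((real (card (Gen n)) powr (- 1 / 2) *
              (\<Sum>k<n - p n. MA (Gen k) X
                 (\<lambda>t. fn K0 (h n) (x, x0, x1) t
                       - (\<integral>y. Pop3 P (fn K0 (h n) (x, x0, x1)) y \<partial>\<mu>)) \<omega>))\<^sup>2) \<partial>M)
         \<longlonglongrightarrow> 0"
proof -
  define d where "d = real DIM('a)"
  obtain B0 where B0: "\<forall>u\<in>range K0. norm u \<le> B0" using K0_bounded bounded_iff by metis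
  define B where "B = max B0 0"
  have Kb: "\<bar>K0 u\<bar> \<le> B" for u
  proof -
    have "norm (K0 u) \<le> B0" using B0 by blast
    thus ?thesis unfolding B_def by simp
  qed
  have B0': "0 \<le> B" unfolding B_def by simp
  have Mprob: "prob_space M" using bmc unfolding BMC_def by simp
  have muprob: "prob_space \<mu>" using H2 unfolding H2_def by simp
  have Pprob: "\<And>y. prob_space (P y)"
    using measurable_space[OF kernel] by (simp add: space_prob_algebra)
  define C where "C n = h n powr (- (3 * real DIM('a)) / 2) * B ^ 3" for n
  define I where "I n = (\<integral>y. Pop3 P (fn K0 (h n) (x, x0, x1)) y \<partial>\<mu>)" for n
  define m where "m n = n - p n" for n
  define a where "a n = real (card (Gen n)) powr (- 1 / 2)" for n
  have fnb: "\<And>n t. \<bar>fn K0 (h n) (x, x0, x1) t\<bar> \<le> C n"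
    unfolding C_def by (rule fn_bound[OF Kb])
  have Pb: "\<And>n y. \<bar>Pop3 P (fn K0 (h n) (x, x0, x1)) y\<bar> \<le> C n"
    unfolding Pop3_def by (rule int_bound[OF Pprob fnb])
  have Ib: "\<And>n. \<bar>I n\<bar> \<le> C n"
    unfolding I_def by (rule int_bound[OF muprob Pb])
  have ftb: "\<bar>fn K0 (h n) (x, x0, x1) t - I n\<bar> \<le> 2 * C n" for n t
    using abs_triangle_ineq4[of "fn K0 (h n) (x, x0, x1) t" "I n"] fnb[of n t] Ib[of n] by linarith
  have Sb: "\<bar>\<Sum>k<m n. MA (Gen k) X (\<lambda>t. fn K0 (h n) (x, x0, x1) t - I n) \<omega>\<bar> \<le> 2 ^ m n * (2 * C n)" for n \<omega>
  proof -
    have "\<bar>\<Sum>k<m n. MA (Gen k) X (\<lambda>t. fn K0 (h n) (x, x0, x1) t - I n) \<omega>\<bar>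
        \<le> (\<Sum>k<m n. \<bar>MA (Gen k) X (\<lambda>t. fn K0 (h n) (x, x0, x1) t - I n) \<omega>\<bar>)" by (rule sum_abs)
    also have "\<dots> \<le> (\<Sum>k<m n. 2 ^ k * (2 * C n))"
      by (intro sum_mono order_trans[OF MA_bound[OF finite_Gen ftb]]) (simp add: card_Gen)
    also have "\<dots> = (\<Sum>k<m n. 2 ^ k) * (2 * C n)" by (simp add: sum_distrib_right)
    also have "\<dots> \<le> 2 ^ m n * (2 * C n)"
      using fnb[of n] by (intro mult_right_mono geo2) (smt (verit))
    finally show ?thesis .
  qed
  define b where "b n = (a n * (2 ^ m n * (2 * C n)))\<^sup>2" for n
  have pw: "(a n * (\<Sum>k<m n. MA (Gen k) X (\<lambda>t. fn K0 (h n) (x, x0, x1) t - I n) \<omega>))\<^sup>2 \<le> b n" for n \<omega>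
  proof -
    have a0: "0 \<le> a n" unfolding a_def by simp
    have "(a n * (\<Sum>k<m n. MA (Gen k) X (\<lambda>t. fn K0 (h n) (x, x0, x1) t - I n) \<omega>))\<^sup>2
       = \<bar>a n * (\<Sum>k<m n. MA (Gen k) X (\<lambda>t. fn K0 (h n) (x, x0, x1) t - I n) \<omega>)\<bar>\<^sup>2" by simp
    also have "\<dots> \<le> (a n * (2 ^ m n * (2 * C n)))\<^sup>2"
      using a0 Sb[of n \<omega>] by (intro power_mono) (auto simp: abs_mult intro: mult_left_mono)
    finally show ?thesis unfolding b_def .
  qed
  define E where "E n = real n * (- 1 / 2) + real (m n) + real n * \<gamma> * (3 * d / 2)" for n
  have bE: "b n = (2 * B ^ 3 * 2 powr E n)\<^sup>2" for n
  proof -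
    have "a n = 2 powr (real n * (- 1 / 2))"
      unfolding a_def card_Gen by (simp add: powr_realpow[symmetric] powr_powr)
    moreover have "h n powr (- (3 * real DIM('a)) / 2) = 2 powr (real n * \<gamma> * (3 * d / 2))"
      unfolding h_def d_def by (simp add: powr_powr)
    moreover have "(2::real) ^ m n = 2 powr real (m n)" by (simp add: powr_realpow)
    ultimately have "a n * (2 ^ m n * (2 * C n)) = 2 * B ^ 3 * (2 powr (real n * (- 1 / 2)) * 2 powr real (m n) * 2 powr (real n * \<gamma> * (3 * d / 2)))"
      unfolding C_def by (simp only: mult_ac)
    also have "\<dots> = 2 * B ^ 3 * 2 powr E n"
      by (simp only: E_def powr_add)
    finally have "a n * (2 ^ m n * (2 * C n)) = 2 * B ^ 3 * 2 powr E n" .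
    thus ?thesis unfolding b_def by (rule arg_cong[where f = "\<lambda>z. z ^ 2"])
  qed
  define g where "g n = (3 * d * \<gamma> - 1) / 2 + real (m n) / real n" for n
  have Eg: "E n = g n * real n" for n
    by (rule l1[OF E_def g_def m_def])
  have mlim: "(\<lambda>n. real (m n) / real n) \<longlonglongrightarrow> 0"
  proof (rule tendsto_sandwich[where f = "\<lambda>_. 0" and h = "\<lambda>n. \<bar>1 - real (p n) / real n\<bar>"])
    show "\<forall>\<^sub>F n in sequentially. 0 \<le> real (m n) / real n" by simp
    show "\<forall>\<^sub>F n in sequentially. real (m n) / real n \<le> \<bar>1 - real (p n) / real n\<bar>"
    proof (rule eventually_sequentiallyI[of 1])
      fix n :: nat assume "1 \<le> n"
      then show "real (m n) / real n \<le> \<bar>1 - real (p n) / real n\<bar>"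
        unfolding m_def by (rule l2)
    qed
    show "(\<lambda>_. 0) \<longlonglongrightarrow> (0::real)" by simp
    have "(\<lambda>n. \<bar>1 - real (p n) / real n\<bar>) \<longlonglongrightarrow> \<bar>1 - 1\<bar>"
      by (intro tendsto_rabs tendsto_diff tendsto_const p_ratio)
    thus "(\<lambda>n. \<bar>1 - real (p n) / real n\<bar>) \<longlonglongrightarrow> 0" by simp
  qed
  have neg: "(3 * d * \<gamma> - 1) / 2 < 0"
  proof -
    have "0 < d" unfolding d_def by simp
    have g3: "\<gamma> < 1 / (3 * d)" using gamma_lt unfolding d_def .
    have "\<gamma> * (3 * d) < 1" using pos_less_divide_eq[of "3 * d" \<gamma> 1] g3 \<open>0 < d\<close> by simp
    thus ?thesis by (simp add: field_simps)
  qed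
  have glim: "g \<longlonglongrightarrow> (3 * d * \<gamma> - 1) / 2"
    unfolding g_def[abs_def] using tendsto_add[OF tendsto_const mlim] by simp
  have "filterlim E at_bot sequentially"
    unfolding Eg[abs_def] by (rule filterlim_tendsto_neg_mult_at_bot[OF glim neg filterlim_real_sequentially])
  hence "(\<lambda>n. 2 powr E n) \<longlonglongrightarrow> 0" by (rule pow_lim)
  hence "(\<lambda>n. (2 * B ^ 3 * 2 powr E n)\<^sup>2) \<longlonglongrightarrow> (2 * B ^ 3 * 0)\<^sup>2"
    by (intro tendsto_power tendsto_mult tendsto_const)
  hence blim: "b \<longlonglongrightarrow> 0" unfolding bE[abs_def] by simp
  hence eblim: "(\<lambda>n. ennreal (b n)) \<longlonglongrightarrow> 0"
    using tendsto_ennrealI[OF blim] by simp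
  show ?thesis
  proof (rule tendsto_sandwich[OF _ _ tendsto_const eblim])
    show "\<forall>\<^sub>F n in sequentially. 0 \<le> (\<integral>\<^sup>+ \<omega>.
            ennreal ((real (card (Gen n)) powr (- 1 / 2) *
              (\<Sum>k<n - p n. MA (Gen k) X
                 (\<lambda>t. fn K0 (h n) (x, x0, x1) t
                       - (\<integral>y. Pop3 P (fn K0 (h n) (x, x0, x1)) y \<partial>\<mu>)) \<omega>))\<^sup>2) \<partial>M)" by simp
    show "\<forall>\<^sub>F n in sequentially. (\<integral>\<^sup>+ \<omega>.
            ennreal ((real (card (Gen n)) powr (- 1 / 2) *
              (\<Sum>k<n - p n. MA (Gen k) X
                 (\<lambda>t. fn K0 (h n) (x, x0, x1) t
                       - (\<integral>y. Pop3 P (fn K0 (h n) (x, x0, x1)) y \<partial>\<mu>)) \<omega>))\<^sup>2) \<partial>M) \<le> ennreal (b n)"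
    proof (rule always_eventually, rule allI)
      fix n
      have "(\<integral>\<^sup>+ \<omega>.
            ennreal ((real (card (Gen n)) powr (- 1 / 2) *
              (\<Sum>k<n - p n. MA (Gen k) X
                 (\<lambda>t. fn K0 (h n) (x, x0, x1) t
                       - (\<integral>y. Pop3 P (fn K0 (h n) (x, x0, x1)) y \<partial>\<mu>)) \<omega>))\<^sup>2) \<partial>M)
          \<le> (\<integral>\<^sup>+ \<omega>. ennreal (b n) \<partial>M)"
      proof (intro nn_integral_mono ennreal_leI)
        fix \<omega>
        show "(real (card (Gen n)) powr (- 1 / 2) *
              (\<Sum>k<n - p n. MA (Gen k) X
                 (\<lambda>t. fn K0 (h n) (x, x0, x1) t
                       - (\<integral>y. Pop3 P (fn K0 (h n) (x, x0, x1)) y \<partial>\<mu>)) \<omega>))\<^sup>2 \<le> b n"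
          using pw[of n \<omega>] unfolding a_def I_def m_def .
      qed
      also have "\<dots> = ennreal (b n)" using Mprob by (simp add: prob_space.emeasure_space_1)
      finally show "(\<integral>\<^sup>+ \<omega>.
            ennreal ((real (card (Gen n)) powr (- 1 / 2) *
              (\<Sum>k<n - p n. MA (Gen k) X
                 (\<lambda>t. fn K0 (h n) (x, x0, x1) t
                       - (\<integral>y. Pop3 P (fn K0 (h n) (x, x0, x1)) y \<partial>\<mu>)) \<omega>))\<^sup>2) \<partial>M) \<le> ennreal (b n)" .
    qed
  qed
qed

end
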